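(* Let $\delta>0$, $c>0$ and $a>0$ be deterministic constants. Let $(\Omega,\mathcal A,\mathbb P)$ carry a filtration $(\mathcal F_n)_{n\ge0}$, and let $(a_n)_{n\ge0}$ and $(\ell_n)_{n\ge0}$ be sequences of random variables with $a_n,\ell_n$ being $\mathcal F_n$-measurable, $a_n\ge 0$ uniformly bounded, $a_n\downarrow a$ almost surely, $\ell_0=1$, and $c\,\ell_n^\delta/a_n\in[0,1]$ for all $n$. Suppose that for each $n\ge0$, conditionally on $\mathcal F_n$, $\omega_{n+1}$ is a Bernoulli$(c\,\ell_n^\delta/a_n)$ random variable and, independently of it, $V_{n+1}$ has distribution function $\mathbb P\{V_{n+1}\le x\}=x^\delta$, $x\in[0,1]$ (both $\mathcal F_{n+1}$-measurable), and \[ \ell_{n+1}=\begin{cases}\ell_n V_{n+1}, & \omega_{n+1}=1,\\ \ell_n, & \omega_{n+1}=0.\end{cases} \] Then \[ \Big(\frac{c}{a}\,n\Big)^{1/\delta}\ell_n \xrightarrow{\mathcal D} \mathrm{Weibull}(\delta), \] and for every $\alpha>0$, \[ \lim_{n\to\infty}\mathbb E\Big[\Big(\frac{c}{a}\,n\Big)^{\alpha/\delta}\ell_n^\alpha\Big]=\frac{\alpha}{\delta}\,\Gamma\Big(\frac{\alpha}{\delta}\Big). \]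
   Context: For $\delta>0$, the Weibull$(\delta)$ distribution has distribution function $1-e^{-x^\delta}$ for $x>0$ and $0$ otherwise. $\Gamma$ is the Gamma function; $\xrightarrow{\mathcal D}$ denotes convergence in distribution. *)

theory Defs
  imports "HOL-Probability.Probability"
begin

definition weibull_cdf :: "real \<Rightarrow> real \<Rightarrow> real" where
  "weibull_cdf \<delta> x = (if x > 0 then 1 - exp (- (x powr \<delta>)) else 0)"

end

theory Submission
  imports Defs
begin

locale L =
  fixes M :: "'w measure" and F :: "nat \<Rightarrow> 'w measure"
    and as l \<omega> V :: "nat \<Rightarrow> 'w \<Rightarrow> real"
    and \<delta> c a :: real
  assumes PS: "prob_space M"
    and dpos: "\<delta> > 0" and cpos: "c > 0" and apos: "a > 0"
    and subalg: "\<And>n. subalgebra M (F n)"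
    and filt: "filtration (space M) F"
    and meas_as: "\<And>n. as n \<in> borel_measurable (F n)"
    and meas_l: "\<And>n. l n \<in> borel_measurable (F n)"
    and meas_\<omega>: "\<And>n. \<omega> (Suc n) \<in> borel_measurable (F (Suc n))"
    and meas_V: "\<And>n. V (Suc n) \<in> borel_measurable (F (Suc n))"
    and as_nonneg: "\<And>n x. x \<in> space M \<Longrightarrow> as n x \<ge> 0"
    and as_bdd: "\<exists>B. \<forall>n. \<forall>x\<in>space M. as n x \<le> B"
    and as_lim: "AE x in M. decseq (\<lambda>n. as n x) \<and> (\<lambda>n. as n x) \<longlonglongrightarrow> a"
    and l0: "\<And>x. x \<in> space M \<Longrightarrow> l 0 x = 1"
    and p_range: "\<And>n x. x \<in> space M \<Longrightarrow>
                    c * l n x powr \<delta> / as n x \<in> {0..1}"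
    and cond1: "\<And>n A y. A \<in> sets (F n) \<Longrightarrow> y \<in> {0..1} \<Longrightarrow>
        measure M (A \<inter> {x \<in> space M. \<omega> (Suc n) x = 1 \<and> V (Suc n) x \<le> y})
          = (\<integral>x. indicator A x * (c * l n x powr \<delta> / as n x) \<partial>M) * y powr \<delta>"
    and cond0: "\<And>n A y. A \<in> sets (F n) \<Longrightarrow> y \<in> {0..1} \<Longrightarrow>
        measure M (A \<inter> {x \<in> space M. \<omega> (Suc n) x = 0 \<and> V (Suc n) x \<le> y})
          = (\<integral>x. indicator A x * (1 - c * l n x powr \<delta> / as n x) \<partial>M) * y powr \<delta>"
    and rec1: "\<And>n x. x \<in> space M \<Longrightarrow> \<omega> (Suc n) x = 1 \<Longrightarrow>
                 l (Suc n) x = l n x * V (Suc n) x"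
    and rec0: "\<And>n x. x \<in> space M \<Longrightarrow> \<omega> (Suc n) x = 0 \<Longrightarrow>
                 l (Suc n) x = l n x"
begin

sublocale prob_space M by (rule PS)

definition p where "p n x = c * l n x powr \<delta> / as n x"

lemma sets_F: "sets (F n) \<subseteq> sets M" and space_F: "space (F n) = space M"
  using subalg[of n] by (auto simp: subalgebra_def)

lemma sets_F_mono: "k \<le> n \<Longrightarrow> sets (F k) \<subseteq> sets (F n)"
  using filt by (auto simp: filtration_def)

lemma FnM: "A \<in> sets (F n) \<Longrightarrow> A \<in> sets M" using sets_F by auto

lemma measF_mono: "k \<le> n \<Longrightarrow> f \<in> borel_measurable (F k) \<Longrightarrow> f \<in> borel_measurable (F n)"
  using sets_F_mono[of k n] space_F[of k] space_F[of n]
  by (auto simp: measurable_def)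

lemma measM: "f \<in> borel_measurable (F n) \<Longrightarrow> f \<in> borel_measurable M"
  using measurable_from_subalg[OF subalg] by blast

lemma p_meas[measurable]: "p n \<in> borel_measurable (F n)"
  unfolding p_def[abs_def] using meas_as[of n] meas_l[of n] by measurable

lemma [measurable]: "as n \<in> borel_measurable M" "l n \<in> borel_measurable M"
  "\<omega> (Suc n) \<in> borel_measurable M" "V (Suc n) \<in> borel_measurable M" "p n \<in> borel_measurable M"
  using measM meas_as meas_l meas_\<omega> meas_V p_meas by blast+

lemma p01: "x \<in> space M \<Longrightarrow> 0 \<le> p n x \<and> p n x \<le> 1"
  using p_range[of x n] by (simp add: p_def)

lemma p_int[simp]: "integrable M (\<lambda>x. f x * p n x)" if "f \<in> borel_measurable M" "\<And>x. x\<in>space M \<Longrightarrow> \<bar>f x\<bar> \<le> 1"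
  using that p01 by (intro integrable_const_bound[where B=1]) (auto simp: abs_mult intro!: mult_le_one)

lemma int_space: fixes f :: "'w \<Rightarrow> real" shows "(\<integral>x. indicator (space M) x * f x \<partial>M) = (\<integral>x. f x \<partial>M)"
  by (intro Bochner_Integration.integral_cong) auto

definition W where "W n = {x\<in>space M. (\<omega> (Suc n) x = 0 \<or> \<omega> (Suc n) x = 1) \<and> 0 < V (Suc n) x \<and> V (Suc n) x \<le> 1}"

lemma W_sets[measurable]: "W n \<in> sets M" unfolding W_def by measurable

lemma prob_W: "prob (W n) = 1"
proof -
  let ?A1 = "{x\<in>space M. \<omega> (Suc n) x = 1 \<and> V (Suc n) x \<le> 1}"
  let ?A0 = "{x\<in>space M. \<omega> (Suc n) x = 0 \<and> V (Suc n) x \<le> 1}"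
  let ?B1 = "{x\<in>space M. \<omega> (Suc n) x = 1 \<and> V (Suc n) x \<le> 0}"
  let ?B0 = "{x\<in>space M. \<omega> (Suc n) x = 0 \<and> V (Suc n) x \<le> 0}"
  have sp: "space M \<in> sets (F n)" using space_F[of n] sets.top[of "F n"] by simp
  have "prob ?A1 = (\<integral>x. p n x \<partial>M)"
    using cond1[OF sp, of 1] int_space[of "p n"] by (simp add: p_def Int_absorb1)
  moreover have "prob ?A0 = (\<integral>x. 1 - p n x \<partial>M)"
    using cond0[OF sp, of 1] int_space[of "\<lambda>x. 1 - p n x"] by (simp add: p_def Int_absorb1)
  moreover have "(\<integral>x. 1 - p n x \<partial>M) = 1 - (\<integral>x. p n x \<partial>M)"
    using p_int[of "\<lambda>_. 1" n] by (simp add: prob_space)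
  moreover have "prob ?B1 = 0"
    using cond1[OF sp, of 0] dpos by (simp add: Int_absorb1)
  moreover have "prob ?B0 = 0"
    using cond0[OF sp, of 0] dpos by (simp add: Int_absorb1)
  moreover have "prob (?A1 \<union> ?A0) = prob ?A1 + prob ?A0"
    by (rule finite_measure_Union) auto
  moreover have "W n = (?A1 \<union> ?A0) - (?B1 \<union> ?B0)" unfolding W_def by auto
  moreover have "prob (?B1 \<union> ?B0) = 0"
    using calculation measure_subadditive[of ?B1 M ?B0] measure_nonneg[of M "?B1 \<union> ?B0"] by simp
  moreover have "?B1 \<union> ?B0 \<in> null_sets M"
    using calculation by (auto simp: emeasure_eq_measure)
  ultimately show ?thesis
    by (simp add: measure_Diff_null_set)
qed

lemma AE_W: "AE x in M. x \<in> W n" using AE_prob_1[OF prob_W] .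

lemma AE_W_all: "AE x in M. \<forall>n. x \<in> W n" using AE_W by (simp add: AE_all_countable)

lemma l_nonneg_n: "AE x in M. l n x \<ge> 0"
proof (induction n)
  case 0 then show ?case using l0 by (auto intro!: AE_I2)
next
  case (Suc n)
  from Suc AE_W[of n] show ?case
  proof eventually_elim
    case (elim x)
    then show ?case using rec0[of x n] rec1[of x n] unfolding W_def by auto
  qed
qed

lemma l_nonneg: "AE x in M. \<forall>n. l n x \<ge> 0" using l_nonneg_n by (simp add: AE_all_countable)

lemma as_ge: "AE x in M. \<forall>n. as n x \<ge> a"
  using as_lim by eventually_elim (auto intro: decseq_ge)

end


lemma powr_inv_less:
  fixes t u d :: real assumes "0 \<le> t" "0 \<le> u" "0 < d"
  shows "t < u powr (1/d) \<longleftrightarrow> t powr d < u"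
proof
  assume "t < u powr (1/d)"
  then have "t powr d < (u powr (1/d)) powr d" using assms by (intro powr_less_mono2) auto
  also have "\<dots> = u" using assms by (simp add: powr_powr)
  finally show "t powr d < u" .
next
  assume h: "t powr d < u"
  have "t = (t powr d) powr (1/d)" using assms by (simp add: powr_powr)
  also have "\<dots> < u powr (1/d)" using assms h by (intro powr_less_mono2) auto
  finally show "t < u powr (1/d)" .
qed

context L begin

definition Beta :: "real measure" where
  "Beta = distr (restrict_space lborel {0..1::real}) borel (\<lambda>u. u powr (1/\<delta>))"

definition G :: "real \<Rightarrow> real" where
  "G t = (if t < 0 then 1 else if t \<le> 1 then 1 - t powr \<delta> else 0)"

lemma sets_Beta[measurable_cong, simp]: "sets Beta = sets borel" by (simp add: Beta_def)

lemma emeasure_Beta: "X \<in> sets borel \<Longrightarrow> emeasure Beta X = emeasure lborel {u\<in>{0..1}. u powr (1/\<delta>) \<in> X}"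
  unfolding Beta_def
  by (subst emeasure_distr) (auto simp: space_restrict_space emeasure_restrict_space intro!: arg_cong2[where f=emeasure] measurable_restrict_space1)

lemma Beta_prob: "prob_space Beta"
proof
  have "space Beta = UNIV" by (simp add: Beta_def)
  moreover have "{u\<in>{0..1::real}. u powr (1/\<delta>) \<in> UNIV} = {0..1}" by auto
  ultimately show "emeasure Beta (space Beta) = 1"
    by (simp add: emeasure_Beta del: atLeastAtMost_iff)
qed

lemma emeasure_Beta_gt: "emeasure Beta {t<..} = ennreal (G t)"
proof -
  consider "t < 0" | "0 \<le> t" "t \<le> 1" | "1 < t" by linarith
  then show ?thesis
  proof cases
    case 1
    then have "{u\<in>{0..1}. u powr (1/\<delta>) \<in> {t<..}} = {0..1}"
      by auto (smt (verit) powr_ge_zero)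
    then show ?thesis using 1 by (simp add: emeasure_Beta G_def)
  next
    case 2
    then have "{u\<in>{0..1}. u powr (1/\<delta>) \<in> {t<..}} = {t powr \<delta><..1}"
    proof (intro set_eqI iffI)
      fix u assume "u \<in> {u\<in>{0..1::real}. u powr (1/\<delta>) \<in> {t<..}}"
      then show "u \<in> {t powr \<delta><..1}" using powr_inv_less[of t u \<delta>] dpos 2 by auto
    next
      fix u assume u: "u \<in> {t powr \<delta><..1}"
      then have "t powr \<delta> < u" by simp
      then have "0 \<le> u" using le_less_trans[OF powr_ge_zero] less_imp_le by blast
      then show "u \<in> {u\<in>{0..1::real}. u powr (1/\<delta>) \<in> {t<..}}" using u powr_inv_less[of t u \<delta>] dpos 2 by auto
    qed
    moreover have "t powr \<delta> \<le> 1" using 2 dpos by (intro powr_le1) auto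
    ultimately show ?thesis using 2 by (simp add: emeasure_Beta G_def)
  next
    case 3
    have e3: "{u\<in>{0..1}. u powr (1/\<delta>) \<in> {t<..}} = {}"
    proof (rule equals0I)
      fix u assume "u \<in> {u\<in>{0..1::real}. u powr (1/\<delta>) \<in> {t<..}}"
      then have "u \<in> {0..1::real}" "u powr (1/\<delta>) \<in> {t<..}" by auto
      moreover have "u powr (1/\<delta>) \<le> 1" using \<open>u \<in> {0..1}\<close> dpos by (intro powr_le1) auto
      ultimately show False using 3 by auto
    qed
    have "emeasure Beta {t<..} = emeasure lborel {u\<in>{0..1}. u powr (1/\<delta>) \<in> {t<..}}"
      by (rule emeasure_Beta) simp
    then show ?thesis using 3 by (simp only: e3 G_def) simp
  qed
qed

end


context L begin

definition EA where "EA n A = (\<integral>x. indicator A x * p n x \<partial>M)"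

lemma EA_nonneg: "0 \<le> EA n A"
  unfolding EA_def using p01 by (intro integral_nonneg_AE AE_I2) (auto simp: indicator_def)

lemma cond1': "A \<in> sets (F n) \<Longrightarrow> y \<in> {0..1} \<Longrightarrow>
   prob {x\<in>space M. x \<in> A \<and> \<omega> (Suc n) x = 1 \<and> V (Suc n) x \<le> y} = EA n A * y powr \<delta>"
proof -
  assume "A \<in> sets (F n)" "y \<in> {0..1}"
  moreover have "A \<inter> {x \<in> space M. \<omega> (Suc n) x = 1 \<and> V (Suc n) x \<le> y} = {x\<in>space M. x \<in> A \<and> \<omega> (Suc n) x = 1 \<and> V (Suc n) x \<le> y}"
    by blast
  moreover have "(\<integral>x. indicator A x * (c * l n x powr \<delta> / as n x) \<partial>M) = EA n A"
    by (simp only: EA_def p_def)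
  ultimately show ?thesis using cond1[of A n y] by metis
qed

lemma tail1: assumes A: "A \<in> sets (F n)"
  shows "prob {x\<in>space M. x \<in> A \<and> \<omega> (Suc n) x = 1 \<and> t < V (Suc n) x} = EA n A * G t"
proof -
  have AM[measurable]: "A \<in> sets M" using FnM[OF A] .
  let ?T = "{x\<in>space M. x \<in> A \<and> \<omega> (Suc n) x = 1 \<and> t < V (Suc n) x}"
  let ?S = "\<lambda>y. {x\<in>space M. x \<in> A \<and> \<omega> (Suc n) x = 1 \<and> V (Suc n) x \<le> y}"
  consider "t < 0" | "0 \<le> t" "t \<le> 1" | "1 < t" by linarith
  then show ?thesis
  proof cases
    case 1
    have "prob ?T = prob (?S 1)"
    proof (rule measure_eq_AE)
      show "AE x in M. x \<in> ?T \<longleftrightarrow> x \<in> ?S 1"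
        using AE_W[of n] by eventually_elim (use 1 in \<open>auto simp: W_def\<close>)
    qed measurable
    moreover have "G t = 1" using 1 by (simp add: G_def)
    ultimately show ?thesis using cond1'[OF A, of 1] by simp
  next
    case 2
    have "prob ?T = prob (?S 1 - ?S t)"
    proof (rule measure_eq_AE)
      show "AE x in M. x \<in> ?T \<longleftrightarrow> x \<in> ?S 1 - ?S t"
        using AE_W[of n] by eventually_elim (use 2 in \<open>auto simp: W_def\<close>)
    qed measurable
    also have "\<dots> = prob (?S 1) - prob (?S t)"
      by (subst finite_measure_Diff) (use 2 in auto)
    finally have "prob ?T = EA n A - EA n A * t powr \<delta>" using cond1'[OF A, of 1] cond1'[OF A, of t] 2 by simp
    moreover have "G t = 1 - t powr \<delta>" using 2 by (simp add: G_def)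
    ultimately show ?thesis by (simp add: right_diff_distrib)
  next
    case 3
    have "prob ?T = prob {}"
    proof (rule measure_eq_AE)
      show "AE x in M. x \<in> ?T \<longleftrightarrow> x \<in> {}"
        using AE_W[of n] by eventually_elim (use 3 in \<open>auto simp: W_def\<close>)
    qed measurable
    moreover have "G t = 0" using 3 by (simp add: G_def)
    ultimately show ?thesis by simp
  qed
qed

lemma G_nonneg: "0 \<le> G t"
proof -
  have "0 \<le> t \<Longrightarrow> t \<le> 1 \<Longrightarrow> t powr \<delta> \<le> 1" by (intro powr_le1) (use dpos in auto)
  then show ?thesis by (auto simp: G_def)
qed

definition W1 where "W1 n = {x\<in>space M. \<omega> (Suc n) x = 1}"

lemma W1_sets[measurable]: "W1 n \<in> sets M" unfolding W1_def by measurable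

lemma F_space_sub: "A \<in> sets (F n) \<Longrightarrow> A \<subseteq> space M"
  using sets.sets_into_space[of A "F n"] space_F[of n] by simp


lemma oneD: assumes A: "A \<in> sets (F n)" and B: "B \<in> sets borel"
  shows "emeasure M {x\<in>space M. x \<in> A \<and> \<omega> (Suc n) x = 1 \<and> V (Suc n) x \<in> B}
          = ennreal (EA n A) * emeasure Beta B"
proof -
  have AM[measurable]: "A \<in> sets M" using FnM[OF A] .
  have Asub: "A \<subseteq> space M" using F_space_sub[OF A] .
  define D1 where "D1 = distr (density M (indicator (W1 n \<inter> A))) borel (V (Suc n))"
  define D2 where "D2 = density Beta (\<lambda>_. ennreal (EA n A))"
  have e1: "emeasure D1 X = emeasure M {x\<in>space M. x \<in> A \<and> \<omega> (Suc n) x = 1 \<and> V (Suc n) x \<in> X}"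
    if X: "X \<in> sets borel" for X
  proof -
    have "emeasure D1 X = emeasure (density M (indicator (W1 n \<inter> A))) (V (Suc n) -` X \<inter> space M)"
      unfolding D1_def using X by (subst emeasure_distr) simp_all
    also have "\<dots> = emeasure M ((W1 n \<inter> A) \<inter> (V (Suc n) -` X \<inter> space M))"
      using X by (intro emeasure_restricted) simp_all
    also have "(W1 n \<inter> A) \<inter> (V (Suc n) -` X \<inter> space M) = {x\<in>space M. x \<in> A \<and> \<omega> (Suc n) x = 1 \<and> V (Suc n) x \<in> X}"
      using Asub by (auto simp: W1_def)
    finally show ?thesis .
  qed
  have e2: "emeasure D2 X = ennreal (EA n A) * emeasure Beta X" if X: "X \<in> sets borel" for X
    unfolding D2_def using X by (subst emeasure_density) (simp_all add: nn_integral_cmult_indicator)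
  have "D1 = D2"
  proof (rule measure_eqI_lessThan)
    show "sets D1 = sets borel" "sets D2 = sets borel" by (auto simp: D1_def D2_def)
    fix t :: real
    have "emeasure D1 {t<..} \<le> 1"
      by (subst e1) (simp_all add: emeasure_le_1 del: greaterThan_iff)
    then show "emeasure D1 {t<..} < \<infinity>"
      by (metis ennreal_one_less_top infinity_ennreal_def le_less_trans)
    have "emeasure D1 {t<..} = ennreal (prob {x\<in>space M. x \<in> A \<and> \<omega> (Suc n) x = 1 \<and> t < V (Suc n) x})"
      by (subst e1) (simp_all add: emeasure_eq_measure)
    also have "\<dots> = ennreal (EA n A) * ennreal (G t)"
      using tail1[OF A, of t] EA_nonneg G_nonneg by (simp add: ennreal_mult)
    also have "\<dots> = emeasure D2 {t<..}"
      by (subst e2) (auto simp: emeasure_Beta_gt)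
    finally show "emeasure D1 {t<..} = emeasure D2 {t<..}" .
  qed
  then show ?thesis using e1[OF B] e2[OF B] by simp
qed

end


context L begin

definition N1 where "N1 n = density (restr_to_subalg M (F n)) (\<lambda>x. ennreal (p n x))"
definition mu where "mu n = distr (density M (indicator (W1 n))) (F n \<Otimes>\<^sub>M borel) (\<lambda>x. (x, V (Suc n) x))"

lemma id_meas: "(\<lambda>x. x) \<in> measurable M (F n)"
  using sets_F[of n] space_F[of n] sets.sets_into_space[of _ "F n"]
  by (auto simp: measurable_def Int_absorb2)

lemma pair_meas: "(\<lambda>x. (x, V (Suc n) x)) \<in> measurable (density M (indicator (W1 n))) (F n \<Otimes>\<^sub>M borel)"
proof (rule measurable_Pair)
  show "(\<lambda>x. x) \<in> measurable (density M (indicator (W1 n))) (F n)"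
    using id_meas[of n] unfolding measurable_def by simp
qed simp

lemma sets_N1[simp]: "sets (N1 n) = sets (F n)"
  by (simp add: N1_def sets_restr_to_subalg[OF subalg])

lemma space_N1[simp]: "space (N1 n) = space M"
  by (simp add: N1_def space_restr_to_subalg)

lemma nnint_F:
  assumes f[measurable]: "f \<in> borel_measurable (F n)" and fb: "\<And>x. x \<in> space M \<Longrightarrow> 0 \<le> f x \<and> f x \<le> 1"
  shows "(\<integral>\<^sup>+x. ennreal (f x) \<partial>N1 n) = ennreal (\<integral>x. f x * p n x \<partial>M)"
proof -
  have pm: "(\<lambda>x. ennreal (p n x)) \<in> borel_measurable (restr_to_subalg M (F n))"
    by (intro measurable_in_subalg[OF subalg]) measurable
  have fm: "(\<lambda>x. ennreal (f x)) \<in> borel_measurable (restr_to_subalg M (F n))"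
    by (intro measurable_in_subalg[OF subalg]) measurable
  have "(\<integral>\<^sup>+x. ennreal (f x) \<partial>N1 n) = (\<integral>\<^sup>+x. ennreal (p n x) * ennreal (f x) \<partial>restr_to_subalg M (F n))"
    unfolding N1_def by (rule nn_integral_density[OF pm fm])
  also have "\<dots> = (\<integral>\<^sup>+x. ennreal (f x * p n x) \<partial>restr_to_subalg M (F n))"
    by (intro nn_integral_cong) (auto simp: space_restr_to_subalg ennreal_mult[symmetric] fb p01 mult.commute)
  also have "\<dots> = (\<integral>\<^sup>+x. ennreal (f x * p n x) \<partial>M)"
    by (rule nn_integral_subalgebra2[OF subalg]) measurable
  also have "\<dots> = ennreal (\<integral>x. f x * p n x \<partial>M)"
  proof (rule nn_integral_eq_integral)
    show "integrable M (\<lambda>x. f x * p n x)"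
      using fb measM[OF f] by (intro p_int) auto
    show "AE x in M. 0 \<le> f x * p n x" using fb p01 by (intro AE_I2) auto
  qed
  finally show ?thesis .
qed

lemma space_in_F: "space M \<in> sets (F n)"
  using sets.top[of "F n"] space_F[of n] by simp

lemma N1_finite: "finite_measure (N1 n)"
proof (rule finite_measureI)
  have "emeasure (N1 n) (space (N1 n)) = (\<integral>\<^sup>+x. ennreal (indicator (space M) x) \<partial>N1 n)"
    by (subst ennreal_indicator, subst nn_integral_indicator) (auto simp: space_in_F)
  also have "\<dots> = ennreal (\<integral>x. indicator (space M) x * p n x \<partial>M)"
    by (rule nnint_F) (auto intro: borel_measurable_indicator space_in_F)
  finally show "emeasure (N1 n) (space (N1 n)) \<noteq> \<infinity>" by simp
qed

lemma pairEq: "N1 n \<Otimes>\<^sub>M Beta = mu n"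
proof (rule pair_measure_eqI)
  show "sigma_finite_measure (N1 n)" using N1_finite[of n] by (simp add: finite_measure_def)
  show "sigma_finite_measure Beta" using Beta_prob by (simp add: prob_space_def finite_measure_def)
  show "sets (N1 n \<Otimes>\<^sub>M Beta) = sets (mu n)"
    by (simp add: mu_def cong: sets_pair_measure_cong)
  fix A B assume A: "A \<in> sets (N1 n)" and B: "B \<in> sets Beta"
  then have A': "A \<in> sets (F n)" and B': "B \<in> sets borel" by auto
  have "emeasure (N1 n) A = (\<integral>\<^sup>+x. ennreal (indicator A x) \<partial>N1 n)"
    using A by (subst ennreal_indicator, subst nn_integral_indicator) auto
  also have "\<dots> = ennreal (EA n A)"
    unfolding EA_def by (rule nnint_F) (use A' in auto)
  finally have e1: "emeasure (N1 n) A = ennreal (EA n A)" .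
  have "emeasure (mu n) (A \<times> B) = emeasure (density M (indicator (W1 n))) ((\<lambda>x. (x, V (Suc n) x)) -` (A \<times> B) \<inter> space M)"
    unfolding mu_def using A' B' by (subst emeasure_distr[OF pair_meas]) auto
  also have "\<dots> = emeasure M (W1 n \<inter> ((\<lambda>x. (x, V (Suc n) x)) -` (A \<times> B) \<inter> space M))"
    using A' B' FnM[OF A'] by (intro emeasure_restricted) auto
  also have "W1 n \<inter> ((\<lambda>x. (x, V (Suc n) x)) -` (A \<times> B) \<inter> space M) = {x\<in>space M. x \<in> A \<and> \<omega> (Suc n) x = 1 \<and> V (Suc n) x \<in> B}"
    by (auto simp: W1_def)
  also have "emeasure M \<dots> = ennreal (EA n A) * emeasure Beta B" by (rule oneD[OF A' B'])
  finally show "emeasure (N1 n) A * emeasure Beta B = emeasure (mu n) (A \<times> B)" using e1 by simp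
qed

end


lemma aux_lv: fixes l v y :: real assumes "0 \<le> y" "l \<le> y" "0 < v" "v \<le> 1" shows "l * v \<le> y"
proof (cases "0 \<le> l")
  case True
  then have "l * v \<le> l * 1" using assms by (intro mult_left_mono) auto
  then show ?thesis using assms by simp
next
  case False
  then have "l * v \<le> 0" using assms by (simp add: mult_nonpos_nonneg)
  then show ?thesis using assms by simp
qed

context L begin

lemma thresh: assumes B[measurable]: "B \<in> sets (F n)" and y: "0 \<le> y" and pos: "\<And>x. x \<in> B \<Longrightarrow> y < l n x"
  shows "prob {x\<in>space M. x \<in> B \<and> \<omega> (Suc n) x = 1 \<and> y < l n x * V (Suc n) x}
       = (\<integral>x. (indicator B x * (1 - (y / l n x) powr \<delta>)) * p n x \<partial>M)"
proof -
  note [measurable] = meas_l[of n]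
  have BM: "B \<in> sets M" using FnM[OF B] .
  define SS where "SS = {z \<in> space (F n \<Otimes>\<^sub>M borel). fst z \<in> B \<and> y < l n (fst z) * snd z}"
  have SS[measurable]: "SS \<in> sets (F n \<Otimes>\<^sub>M borel)" unfolding SS_def by measurable
  define f where "f x = indicator B x * (1 - (y / l n x) powr \<delta>)" for x
  have fm[measurable]: "f \<in> borel_measurable (F n)" unfolding f_def[abs_def] by measurable
  have f01: "0 \<le> f x \<and> f x \<le> 1" for x
  proof (cases "x \<in> B")
    case True
    then have "0 \<le> y / l n x" "y / l n x \<le> 1" using pos[of x] y by auto
    then have "(y / l n x) powr \<delta> \<le> 1" by (intro powr_le1) (use dpos in auto)
    then show ?thesis using True by (simp add: f_def)
  qed (simp add: f_def)
  have sfB: "sigma_finite_measure Beta" using Beta_prob by (simp add: prob_space_def finite_measure_def)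
  have "emeasure (mu n) SS = emeasure (density M (indicator (W1 n))) ((\<lambda>x. (x, V (Suc n) x)) -` SS \<inter> space M)"
    unfolding mu_def by (subst emeasure_distr[OF pair_meas]) auto
  also have "\<dots> = emeasure M (W1 n \<inter> ((\<lambda>x. (x, V (Suc n) x)) -` SS \<inter> space M))"
    using measurable_sets[OF pair_meas SS] by (intro emeasure_restricted) simp_all
  also have "W1 n \<inter> ((\<lambda>x. (x, V (Suc n) x)) -` SS \<inter> space M) = {x\<in>space M. x \<in> B \<and> \<omega> (Suc n) x = 1 \<and> y < l n x * V (Suc n) x}"
    by (auto simp: W1_def SS_def space_pair_measure space_F)
  finally have e1: "emeasure (mu n) SS = emeasure M {x\<in>space M. x \<in> B \<and> \<omega> (Suc n) x = 1 \<and> y < l n x * V (Suc n) x}" .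
  have "emeasure (N1 n \<Otimes>\<^sub>M Beta) SS = (\<integral>\<^sup>+x. emeasure Beta (Pair x -` SS) \<partial>N1 n)"
    by (rule sigma_finite_measure.emeasure_pair_measure_alt[OF sfB]) (simp cong: sets_pair_measure_cong)
  also have "\<dots> = (\<integral>\<^sup>+x. ennreal (f x) \<partial>N1 n)"
  proof (intro nn_integral_cong)
    fix x assume x: "x \<in> space (N1 n)"
    show "emeasure Beta (Pair x -` SS) = ennreal (f x)"
    proof (cases "x \<in> B")
      case True
      have lp: "0 < l n x" using pos[OF True] y by auto
      have "Pair x -` SS = {y / l n x <..}"
        using x lp True by (auto simp: SS_def space_pair_measure space_F field_simps)
      moreover have "0 \<le> y / l n x" "y / l n x \<le> 1" using pos[OF True] y lp by auto
      ultimately show ?thesis using True by (simp add: emeasure_Beta_gt G_def f_def)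
    next
      case False
      then have "Pair x -` SS = {}" by (auto simp: SS_def)
      then show ?thesis using False by (simp add: f_def)
    qed
  qed
  also have "\<dots> = ennreal (\<integral>x. f x * p n x \<partial>M)"
    by (rule nnint_F[OF fm]) (use f01 in auto)
  finally have "emeasure M {x\<in>space M. x \<in> B \<and> \<omega> (Suc n) x = 1 \<and> y < l n x * V (Suc n) x} = ennreal (\<integral>x. f x * p n x \<partial>M)"
    using e1 pairEq[of n] by simp
  moreover have "0 \<le> (\<integral>x. f x * p n x \<partial>M)"
    using f01 p01 by (intro integral_nonneg_AE AE_I2) auto
  ultimately show ?thesis by (simp add: emeasure_eq_measure f_def)
qed

lemma K: assumes B[measurable]: "B \<in> sets (F n)" and y: "0 \<le> y"
  shows "prob {x\<in>space M. x \<in> B \<and> y < l (Suc n) x}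
       = (\<integral>x. indicator (B \<inter> {x\<in>space M. y < l n x}) x * (1 - c * y powr \<delta> / as n x) \<partial>M)"
proof -
  note [measurable] = meas_l[of n] meas_as[of n]
  have BM[measurable]: "B \<in> sets M" using FnM[OF B] .
  define B' where "B' = B \<inter> {x\<in>space M. y < l n x}"
  have "{x\<in>space (F n). y < l n x} \<in> sets (F n)" by measurable
  then have B'F[measurable]: "B' \<in> sets (F n)" unfolding B'_def using sets.Int[OF B] space_F[of n] by simp
  have B'M[measurable]: "B' \<in> sets M" using FnM[OF B'F] .
  have B'pos: "\<And>x. x \<in> B' \<Longrightarrow> y < l n x" by (auto simp: B'_def)
  define S0 where "S0 = {x\<in>space M. x \<in> B' \<and> \<omega> (Suc n) x = 0}"
  define S1 where "S1 = {x\<in>space M. x \<in> B' \<and> \<omega> (Suc n) x = 1 \<and> y < l n x * V (Suc n) x}"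
  have [measurable]: "S0 \<in> sets M" "S1 \<in> sets M" unfolding S0_def S1_def by measurable
  have h1: "prob {x\<in>space M. x \<in> B \<and> y < l (Suc n) x} = prob (S0 \<union> S1)"
  proof (rule measure_eq_AE)
    show "AE x in M. (x \<in> {x\<in>space M. x \<in> B \<and> y < l (Suc n) x}) = (x \<in> S0 \<union> S1)"
      using AE_W[of n]
    proof eventually_elim
      case (elim x)
      then have xs: "x \<in> space M" and om: "\<omega> (Suc n) x = 0 \<or> \<omega> (Suc n) x = 1"
        and V01: "0 < V (Suc n) x" "V (Suc n) x \<le> 1" by (auto simp: W_def)
      show ?case
      proof (cases "\<omega> (Suc n) x = 0")
        case True
        then show ?thesis using rec0[OF xs True] xs by (auto simp: S0_def S1_def B'_def)
      next
        case False
        then have o1: "\<omega> (Suc n) x = 1" using om by auto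
        have "y < l n x" if "y < l n x * V (Suc n) x"
          using aux_lv[of y "l n x" "V (Suc n) x"] y V01 that by force
        then show ?thesis using rec1[OF xs o1] xs o1 by (auto simp: S0_def S1_def B'_def)
      qed
    qed
  qed measurable
  have h2: "prob (S0 \<union> S1) = prob S0 + prob S1"
    by (rule finite_measure_Union) (auto simp: S0_def S1_def)
  have h3: "prob S0 = (\<integral>x. indicator B' x * (1 - p n x) \<partial>M)"
  proof -
    have "prob S0 = prob (B' \<inter> {x \<in> space M. \<omega> (Suc n) x = 0 \<and> V (Suc n) x \<le> 1})"
    proof (rule measure_eq_AE)
      show "AE x in M. (x \<in> S0) = (x \<in> B' \<inter> {x \<in> space M. \<omega> (Suc n) x = 0 \<and> V (Suc n) x \<le> 1})"
        using AE_W[of n] by eventually_elim (auto simp: W_def S0_def)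
    qed measurable
    also have "\<dots> = (\<integral>x. indicator B' x * (1 - c * l n x powr \<delta> / as n x) \<partial>M) * 1 powr \<delta>"
      by (rule cond0[OF B'F]) simp
    finally show ?thesis by (simp add: p_def)
  qed
  have h4: "prob S1 = (\<integral>x. (indicator B' x * (1 - (y / l n x) powr \<delta>)) * p n x \<partial>M)"
    unfolding S1_def by (rule thresh[OF B'F y B'pos])
  have i1: "integrable M (\<lambda>x. indicator B' x * (1 - p n x))"
    using p01 by (intro integrable_const_bound[where B=1]) (auto simp: indicator_def)
  have i2: "integrable M (\<lambda>x. (indicator B' x * (1 - (y / l n x) powr \<delta>)) * p n x)"
  proof (rule p_int)
    show "(\<lambda>x. indicator B' x * (1 - (y / l n x) powr \<delta>)) \<in> borel_measurable M" by measurable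
    fix x assume "x \<in> space M"
    show "\<bar>indicator B' x * (1 - (y / l n x) powr \<delta>)\<bar> \<le> 1"
    proof (cases "x \<in> B'")
      case True
      then have "0 \<le> y / l n x" "y / l n x \<le> 1" using B'pos[OF True] y by auto
      then have "(y / l n x) powr \<delta> \<le> 1" by (intro powr_le1) (use dpos in auto)
      then show ?thesis using True by simp
    qed simp
  qed
  have "prob {x\<in>space M. x \<in> B \<and> y < l (Suc n) x} =
      (\<integral>x. indicator B' x * (1 - p n x) + (indicator B' x * (1 - (y / l n x) powr \<delta>)) * p n x \<partial>M)"
    using h1 h2 h3 h4 Bochner_Integration.integral_add[OF i1 i2] by simp
  also have "\<dots> = (\<integral>x. indicator B' x * (1 - c * y powr \<delta> / as n x) \<partial>M)"
  proof (intro Bochner_Integration.integral_cong refl)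
    fix x assume xs: "x \<in> space M"
    show "indicator B' x * (1 - p n x) + (indicator B' x * (1 - (y / l n x) powr \<delta>)) * p n x
        = indicator B' x * (1 - c * y powr \<delta> / as n x)"
    proof (cases "x \<in> B'")
      case True
      have lp: "0 < l n x" using B'pos[OF True] y by auto
      then have lpp: "0 < l n x powr \<delta>" by simp
      have "(y / l n x) powr \<delta> = y powr \<delta> / l n x powr \<delta>" using lp y by (simp add: powr_divide)
      then have "p n x * (y / l n x) powr \<delta> = c * y powr \<delta> / as n x"
        using lpp by (simp add: p_def field_simps)
      then show ?thesis using True by (simp add: algebra_simps)
    qed simp
  qed
  finally show ?thesis unfolding B'_def .
qed

end


context L begin

definition Bd0 where "Bd0 = (SOME B. \<forall>n. \<forall>x\<in>space M. as n x \<le> B)"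
definition Bd where "Bd = max Bd0 a"

lemma as_le_Bd: "x \<in> space M \<Longrightarrow> as n x \<le> Bd"
proof -
  have "\<forall>n. \<forall>x\<in>space M. as n x \<le> Bd0" unfolding Bd0_def using as_bdd by (rule someI_ex)
  then show "x \<in> space M \<Longrightarrow> as n x \<le> Bd" by (auto simp: Bd_def intro: le_max_iff_disj[THEN iffD2])
qed

lemma Bd_pos: "0 < Bd" using apos by (simp add: Bd_def)

lemma a_le_Bd: "a \<le> Bd" by (simp add: Bd_def)

definition Pr where "Pr n y B = prob {x\<in>space M. x \<in> B \<and> y < l n x}"

lemma Pr_nonneg: "0 \<le> Pr n y B" by (simp add: Pr_def)

lemma int_bound:
  assumes S[measurable]: "S \<in> sets M"
  shows "integrable M (\<lambda>x. indicator S x * (1 - c * y powr \<delta> / as n x))"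
proof (rule integrable_const_bound[where B="1 + c * y powr \<delta> / a"])
  show "AE x in M. norm (indicator S x * (1 - c * y powr \<delta> / as n x)) \<le> 1 + c * y powr \<delta> / a"
    using as_ge
  proof eventually_elim
    case (elim x)
    then have ax: "a \<le> as n x" by auto
    then have "c * y powr \<delta> / as n x \<le> c * y powr \<delta> / a"
      using apos cpos by (intro divide_left_mono) auto
    moreover have "0 \<le> c * y powr \<delta> / as n x" using ax apos cpos by auto
    ultimately show ?case by (auto simp: indicator_def)
  qed
qed measurable

lemma int_ind: assumes S: "S \<in> sets M" shows "(\<integral>x. indicator S x * u \<partial>M) = u * prob S"
proof -
  have "(\<integral>x. indicator S x * u \<partial>M) = (\<integral>x. indicator S x \<partial>M) * u" by (rule integral_mult_left_zero)
  also have "\<dots> = prob S * u" using S by (simp add: emeasure_eq_measure)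
  finally show ?thesis by simp
qed

lemma int_c: fixes u :: real assumes S[measurable]: "S \<in> sets M" shows "integrable M (\<lambda>x. indicator S x * u)"
  by (rule integrable_const_bound[where B="\<bar>u\<bar>"]) (auto simp: indicator_def)

lemma setEq: "B \<inter> {x\<in>space M. y < l n x} = {x\<in>space M. x \<in> B \<and> y < l n x}" by auto

lemma stepK: assumes B: "B \<in> sets (F n)" and y: "0 \<le> y"
  shows "Pr (Suc n) y B = (\<integral>x. indicator (B \<inter> {x\<in>space M. y < l n x}) x * (1 - c * y powr \<delta> / as n x) \<partial>M)"
  using K[OF B y] by (simp add: Pr_def)

lemma Bset: assumes B: "B \<in> sets (F n)" shows "B \<inter> {x\<in>space M. y < l n x} \<in> sets M"
  using FnM[OF B] by measurable

lemma step_lower: assumes B: "B \<in> sets (F n)" and y: "0 \<le> y"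
  and u: "AE x in M. x \<in> B \<longrightarrow> u \<le> 1 - c * y powr \<delta> / as n x"
  shows "u * Pr n y B \<le> Pr (Suc n) y B"
proof -
  have S: "B \<inter> {x\<in>space M. y < l n x} \<in> sets M" by (rule Bset[OF B])
  have "u * Pr n y B = (\<integral>x. indicator (B \<inter> {x\<in>space M. y < l n x}) x * u \<partial>M)"
    using int_ind[OF S, of u] unfolding Pr_def setEq by (rule sym)
  also have "\<dots> \<le> (\<integral>x. indicator (B \<inter> {x\<in>space M. y < l n x}) x * (1 - c * y powr \<delta> / as n x) \<partial>M)"
    using u by (intro integral_mono_AE[OF _ _ ] int_bound[OF S] int_c[OF S]) (auto simp: indicator_def elim!: eventually_mono)
  also have "\<dots> = Pr (Suc n) y B" using stepK[OF B y] by simp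
  finally show ?thesis .
qed

lemma step_upper: assumes B: "B \<in> sets (F n)" and y: "0 \<le> y"
  and u: "AE x in M. x \<in> B \<longrightarrow> 1 - c * y powr \<delta> / as n x \<le> u"
  shows "Pr (Suc n) y B \<le> u * Pr n y B"
proof -
  have S: "B \<inter> {x\<in>space M. y < l n x} \<in> sets M" by (rule Bset[OF B])
  have "Pr (Suc n) y B = (\<integral>x. indicator (B \<inter> {x\<in>space M. y < l n x}) x * (1 - c * y powr \<delta> / as n x) \<partial>M)"
    using stepK[OF B y] by simp
  also have "\<dots> \<le> (\<integral>x. indicator (B \<inter> {x\<in>space M. y < l n x}) x * u \<partial>M)"
    using u by (intro integral_mono_AE[OF _ _ ] int_bound[OF S] int_c[OF S]) (auto simp: indicator_def elim!: eventually_mono)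
  also have "\<dots> = u * Pr n y B"
    using int_ind[OF S, of u] unfolding Pr_def setEq .
  finally show ?thesis .
qed

lemma Pr_le1: "Pr n y B \<le> 1" by (simp add: Pr_def)

lemma Pr_lower: assumes y: "0 \<le> y" "y < 1" and k: "c * y powr \<delta> / a \<le> 1"
  shows "(1 - c * y powr \<delta> / a) ^ n \<le> Pr n y (space M)"
proof (induction n)
  case 0
  have "{x\<in>space M. x \<in> space M \<and> y < l 0 x} = space M" using l0 y by auto
  then show ?case by (simp add: Pr_def prob_space)
next
  case (Suc n)
  have "(1 - c * y powr \<delta> / a) * Pr n y (space M) \<le> Pr (Suc n) y (space M)"
  proof (rule step_lower[OF space_in_F y(1)])
    show "AE x in M. x \<in> space M \<longrightarrow> 1 - c * y powr \<delta> / a \<le> 1 - c * y powr \<delta> / as n x"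
      using as_ge
    proof eventually_elim
      case (elim x)
      then have "a \<le> as n x" by auto
      then have "c * y powr \<delta> / as n x \<le> c * y powr \<delta> / a"
        using apos cpos by (intro divide_left_mono) auto
      then show ?case by simp
    qed
  qed
  moreover have "(1 - c * y powr \<delta> / a) ^ Suc n \<le> (1 - c * y powr \<delta> / a) * Pr n y (space M)"
    using Suc k by (simp add: mult_left_mono)
  ultimately show ?case by linarith
qed

lemma one_minus_le_exp: "1 - x \<le> exp (- x)" for x :: real
  using exp_ge_add_one_self[of "- x"] by simp

lemma Pr_tail: assumes y: "0 \<le> y"
  shows "Pr n y (space M) \<le> exp (- (c * y powr \<delta> / Bd) * n)"
proof (induction n)
  case 0
  then show ?case using Pr_le1 by simp
next
  case (Suc n)
  let ?k = "c * y powr \<delta> / Bd"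
  have "Pr (Suc n) y (space M) \<le> (1 - ?k) * Pr n y (space M)"
  proof (rule step_upper[OF space_in_F y(1)])
    show "AE x in M. x \<in> space M \<longrightarrow> 1 - c * y powr \<delta> / as n x \<le> 1 - ?k"
      using as_ge
    proof eventually_elim
      case (elim x)
      then have "a \<le> as n x" by auto
      then have "c * y powr \<delta> / Bd \<le> c * y powr \<delta> / as n x" if "x \<in> space M"
        using apos cpos as_le_Bd[OF that, of n] by (intro divide_left_mono) auto
      then show ?case by simp
    qed
  qed
  also have "\<dots> \<le> exp (- ?k) * Pr n y (space M)"
    using Pr_nonneg one_minus_le_exp by (intro mult_right_mono) auto
  also have "\<dots> \<le> exp (- ?k) * exp (- ?k * n)"
    using Suc by (intro mult_left_mono) auto
  also have "\<dots> = exp (- ?k * Suc n)" by (simp add: exp_add[symmetric] algebra_simps add_divide_distrib)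
  finally show ?case .
qed

definition GE where "GE N n t = {x\<in>space M. \<forall>k\<in>{N..n}. as k x \<le> t}"

lemma GE_sets: "GE N n t \<in> sets (F n)"
proof -
  have "Measurable.pred (F n) (\<lambda>x. \<forall>k\<in>{N..n}. as k x \<le> t)"
  proof (rule pred_intros_finite)
    fix k assume "k \<in> {N..n}"
    then have [measurable]: "as k \<in> borel_measurable (F n)" using measF_mono[OF _ meas_as] by auto
    show "Measurable.pred (F n) (\<lambda>x. as k x \<le> t)" by measurable
  qed simp
  then show ?thesis unfolding GE_def pred_def using space_F[of n] by simp
qed

lemma GE_mono: "GE N (Suc n) t \<subseteq> GE N n t" by (auto simp: GE_def)

lemma Pr_mono_set: "B \<subseteq> B' \<Longrightarrow> B' \<in> sets (F n) \<Longrightarrow> Pr n y B \<le> Pr n y B'"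
  unfolding Pr_def using FnM[of B' n] by (intro finite_measure_mono) auto

lemma Pr_good: assumes y: "0 \<le> y" and e: "0 < e"
  shows "Pr (N + m + 1) y (GE N (N + m) (a * (1 + e))) \<le> exp (- (c * y powr \<delta> / (a * (1 + e))) * m)"
proof (induction m)
  case 0
  then show ?case using Pr_le1 by simp
next
  case (Suc m)
  let ?k = "c * y powr \<delta> / (a * (1 + e))"
  let ?n = "N + m + 1"
  have "Pr (Suc ?n) y (GE N ?n (a * (1 + e))) \<le> (1 - ?k) * Pr ?n y (GE N ?n (a * (1 + e)))"
  proof (rule step_upper[OF GE_sets y(1)])
    show "AE x in M. x \<in> GE N ?n (a * (1 + e)) \<longrightarrow> 1 - c * y powr \<delta> / as ?n x \<le> 1 - ?k"
      using as_ge
    proof eventually_elim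
      case (elim x)
      then have "a \<le> as ?n x" by auto
      then have "c * y powr \<delta> / (a * (1 + e)) \<le> c * y powr \<delta> / as ?n x" if "x \<in> GE N ?n (a * (1 + e))"
        using apos cpos that e by (intro divide_left_mono) (auto simp: GE_def)
      then show ?case by auto
    qed
  qed
  also have "\<dots> \<le> exp (- ?k) * Pr ?n y (GE N ?n (a * (1 + e)))"
    using Pr_nonneg one_minus_le_exp by (intro mult_right_mono) auto
  also have "\<dots> \<le> exp (- ?k) * Pr ?n y (GE N (N + m) (a * (1 + e)))"
    using GE_mono[of N "N + m"] GE_sets[of N "N + m"] sets_F_mono[of "N + m" ?n]
    by (intro mult_left_mono Pr_mono_set) auto
  also have "\<dots> \<le> exp (- ?k) * exp (- ?k * m)"
    using Suc by (intro mult_left_mono) auto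
  also have "\<dots> = exp (- ?k * Suc m)" by (simp add: exp_add[symmetric] algebra_simps add_divide_distrib)
  finally show ?case by (simp add: add.commute add.left_commute)
qed

end


context L begin

definition bad where "bad N t = {x\<in>space M. \<exists>k\<ge>N. t < as k x}"

lemma bad_sets[measurable]: "bad N t \<in> sets M"
  unfolding bad_def by measurable

lemma bad_lim: assumes t: "a < t" shows "(\<lambda>N. prob (bad N t)) \<longlonglongrightarrow> 0"
proof -
  have "(\<lambda>N. prob (bad N t)) \<longlonglongrightarrow> prob (\<Inter>N. bad N t)"
  proof (rule finite_Lim_measure_decseq)
    show "range (\<lambda>N. bad N t) \<subseteq> events" by auto
    show "decseq (\<lambda>N. bad N t)" by (intro decseq_SucI) (auto simp: bad_def; blast dest: Suc_leD)
  qed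
  moreover have "prob (\<Inter>N. bad N t) = 0"
  proof -
    have "AE x in M. x \<notin> (\<Inter>N. bad N t)"
      using as_lim
    proof eventually_elim
      case (elim x)
      then have "eventually (\<lambda>k. as k x < t) sequentially"
        using t by (auto intro: order_tendstoD)
      then obtain N where "\<forall>k\<ge>N. as k x < t" by (auto simp: eventually_sequentially)
      then show ?case unfolding bad_def by (auto intro!: exI[of _ N] simp: not_less less_imp_le)
    qed
    then have "(\<Inter>N. bad N t) \<in> null_sets M"
      using AE_iff_null_sets[of "\<Inter>N. bad N t" M] by auto
    then show ?thesis by (simp add: measure_def null_sets_def)
  qed
  ultimately show ?thesis by simp
qed

lemma Pr_split: "Pr n y (space M) \<le> Pr n y (GE N n' t) + prob (bad N t)" if "n' \<ge> N"
proof -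
  have "{x\<in>space M. x \<in> space M \<and> y < l n x} \<subseteq> {x\<in>space M. x \<in> GE N n' t \<and> y < l n x} \<union> bad N t"
    by (auto simp: GE_def bad_def not_le)
  then have "Pr n y (space M) \<le> prob ({x\<in>space M. x \<in> GE N n' t \<and> y < l n x} \<union> bad N t)"
    unfolding Pr_def using FnM[OF GE_sets[of N n' t]]
    by (intro finite_measure_mono) auto
  also have "\<dots> \<le> Pr n y (GE N n' t) + prob (bad N t)"
    unfolding Pr_def using FnM[OF GE_sets[of N n' t]] by (intro measure_Un_le) auto
  finally show ?thesis .
qed

definition s where "s n = (c / a * real n) powr (1 / \<delta>)"

definition Q where "Q n x = prob {w\<in>space M. x < s n * l n w}"

lemma s_pos: "n > 0 \<Longrightarrow> 0 < s n" using apos cpos by (simp add: s_def)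

lemma s_pow: "s n powr \<delta> = c / a * real n"
  using apos cpos dpos by (simp add: s_def powr_powr)

lemma Q_Pr: "n > 0 \<Longrightarrow> Q n x = Pr n (x / s n) (space M)"
  unfolding Q_def Pr_def using s_pos[of n]
  by (intro arg_cong[where f=prob]) (auto simp: field_simps)

lemma kappa: assumes "n > 0" "0 \<le> x" shows "c * (x / s n) powr \<delta> / a = x powr \<delta> / n"
proof -
  have "(x / s n) powr \<delta> = x powr \<delta> / s n powr \<delta>" using assms s_pos[of n] by (simp add: powr_divide)
  then show ?thesis using assms apos cpos by (simp add: s_pow field_simps)
qed

lemma Q_lower: assumes n: "n > 0" and x: "0 \<le> x" and y1: "x / s n < 1" and k: "x powr \<delta> / n \<le> 1"
  shows "(1 - x powr \<delta> / n) ^ n \<le> Q n x"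
  using Pr_lower[of "x / s n" n] kappa[OF n x] Q_Pr[OF n] y1 k x s_pos[OF n] by simp

lemma Q_tail: assumes n: "n > 0" and x: "0 \<le> x"
  shows "Q n x \<le> exp (- (a / Bd) * x powr \<delta>)"
proof -
  have "c * (x / s n) powr \<delta> / Bd = (a / Bd) * (x powr \<delta> / n)"
    using kappa[OF n x] apos Bd_pos by (simp add: field_simps)
  then show ?thesis using Pr_tail[of "x / s n" n] Q_Pr[OF n] x s_pos[OF n] n by simp
qed

lemma Q_upper: assumes n: "n > N" and x: "0 \<le> x" and e: "0 < e"
  shows "Q n x \<le> exp (- (x powr \<delta> / (1 + e)) * ((real n - (real N + 1)) / real n)) + prob (bad N (a * (1 + e)))"
proof -
  obtain m where nm: "n = N + m + 1" using n by (metis add.commute add_Suc less_iff_Suc_add plus_1_eq_Suc)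
  have n0: "n > 0" using n by simp
  have "c * (x / s n) powr \<delta> / (a * (1 + e)) = (c * (x / s n) powr \<delta> / a) / (1 + e)"
    by simp
  also have "\<dots> = x powr \<delta> / (1 + e) / n" using kappa[OF n0 x] by simp
  finally have kk: "c * (x / s n) powr \<delta> / (a * (1 + e)) = x powr \<delta> / (1 + e) / n" .
  then have "Pr n (x / s n) (GE N (N + m) (a * (1 + e))) \<le> exp (- (x powr \<delta> / (1 + e) / n) * m)"
    using Pr_good[of "x / s n" e N m] x s_pos[OF n0] e nm kk by simp
  also have "- (x powr \<delta> / (1 + e) / n) * m = - (x powr \<delta> / (1 + e)) * ((real n - (real N + 1)) / real n)"
    using nm by (simp add: field_simps)
  finally have "Pr n (x / s n) (GE N (N + m) (a * (1 + e))) \<le> exp (- (x powr \<delta> / (1 + e)) * ((real n - (real N + 1)) / real n))" .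
  then show ?thesis using Pr_split[of N "N + m" n "x / s n" "a * (1 + e)"] Q_Pr[OF n0] by simp
qed

end


lemma nk_lim: "(\<lambda>n. (real n - k) / real n) \<longlonglongrightarrow> 1"
proof -
  have "(\<lambda>n. 1 - k / real n) \<longlonglongrightarrow> 1 - 0" by (intro tendsto_intros lim_const_over_n)
  moreover have "eventually (\<lambda>n. 1 - k / real n = (real n - k) / real n) sequentially"
    using eventually_gt_at_top[of "0::nat"] by eventually_elim (simp add: field_simps)
  ultimately show ?thesis by (simp add: tendsto_cong)
qed

lemma ev_real_ge: "eventually (\<lambda>n. z \<le> real n) sequentially"
  using filterlim_real_sequentially by (simp add: filterlim_at_top)

context L begin

lemma ev_small: assumes x: "0 \<le> x" shows "eventually (\<lambda>n. x / s n < 1) sequentially"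
proof -
  have "eventually (\<lambda>n. x powr \<delta> * (a / c) + 1 \<le> real n) sequentially" by (rule ev_real_ge)
  then show ?thesis
  proof (rule eventually_mono)
    fix n assume n: "x powr \<delta> * (a / c) + 1 \<le> real n"
    then have n0: "n > 0" using apos cpos by (smt (verit) divide_pos_pos mult_nonneg_nonneg of_nat_0_less_iff powr_ge_zero)
    have "x powr \<delta> < c / a * real n"
    proof -
      have "x powr \<delta> * (a / c) < real n" using n by simp
      then have "x powr \<delta> < real n * (c / a)" using apos cpos by (simp add: field_simps)
      then show ?thesis by (simp add: mult.commute)
    qed
    then have "x < s n" unfolding s_def using powr_inv_less[of x "c / a * real n" \<delta>] x dpos apos cpos by simp
    then show "x / s n < 1" using s_pos[OF n0] by simp
  qed
qed

lemma Q_lim: assumes x: "0 \<le> x" shows "(\<lambda>n. Q n x) \<longlonglongrightarrow> exp (- (x powr \<delta>))"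
proof (rule order_tendstoI)
  fix z assume z: "z < exp (- (x powr \<delta>))"
  have "(\<lambda>n. (1 + (- (x powr \<delta>)) / real n) ^ n) \<longlonglongrightarrow> exp (- (x powr \<delta>))"
    by (rule tendsto_exp_limit_sequentially)
  then have "eventually (\<lambda>n. z < (1 - x powr \<delta> / real n) ^ n) sequentially"
    using z by (auto dest: order_tendstoD(1))
  moreover have "eventually (\<lambda>n. x / s n < 1) sequentially" by (rule ev_small[OF x])
  moreover have "eventually (\<lambda>n. max 1 (x powr \<delta>) \<le> real n) sequentially" by (rule ev_real_ge)
  ultimately show "eventually (\<lambda>n. z < Q n x) sequentially"
  proof eventually_elim
    case (elim n)
    then have n0: "n > 0" by (cases n) auto
    have "x powr \<delta> / real n \<le> 1" using elim n0 by (simp add: field_simps)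
    then show ?case using Q_lower[OF n0 x] elim by fastforce
  qed
next
  fix z assume z: "exp (- (x powr \<delta>)) < z"
  define d where "d = z - exp (- (x powr \<delta>))"
  have d: "0 < d" using z by (simp add: d_def)
  have "(\<lambda>j. exp (- (x powr \<delta> / (1 + inverse (real (Suc j)))))) \<longlonglongrightarrow> exp (- (x powr \<delta> / (1 + 0)))"
    by (intro tendsto_intros LIMSEQ_inverse_real_of_nat) auto
  then have "eventually (\<lambda>j. exp (- (x powr \<delta> / (1 + inverse (real (Suc j))))) < exp (- (x powr \<delta>)) + d / 2) sequentially"
    using d by (intro order_tendstoD(2)) auto
  then obtain j where j: "exp (- (x powr \<delta> / (1 + inverse (real (Suc j))))) < exp (- (x powr \<delta>)) + d / 2"
    by (auto simp: eventually_sequentially)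
  define e where "e = inverse (real (Suc j))"
  have e: "0 < e" by (simp add: e_def)
  have "a < a * (1 + e)" using e apos by simp
  from bad_lim[OF this] d have "eventually (\<lambda>N. prob (bad N (a * (1 + e))) < d / 4) sequentially"
    by (intro order_tendstoD(2)) auto
  then obtain N where N: "prob (bad N (a * (1 + e))) < d / 4" by (auto simp: eventually_sequentially)
  define b where "b = prob (bad N (a * (1 + e)))"
  have "(\<lambda>n. exp (- (x powr \<delta> / (1 + e)) * ((real n - (real N + 1)) / real n)) + b)
      \<longlonglongrightarrow> exp (- (x powr \<delta> / (1 + e)) * 1) + b"
    by (intro tendsto_intros nk_lim)
  then have "eventually (\<lambda>n. exp (- (x powr \<delta> / (1 + e)) * ((real n - (real N + 1)) / real n)) + b
      < exp (- (x powr \<delta> / (1 + e)) * 1) + b + d / 4) sequentially"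
    using d by (intro order_tendstoD(2)) auto
  moreover have "eventually (\<lambda>n. N < n) sequentially" by (rule eventually_gt_at_top)
  ultimately show "eventually (\<lambda>n. Q n x < z) sequentially"
  proof eventually_elim
    case (elim n)
    have "Q n x \<le> exp (- (x powr \<delta> / (1 + e)) * ((real n - (real N + 1)) / real n)) + b"
      using Q_upper[OF elim(2) x e] by (simp add: b_def)
    also have "\<dots> < exp (- (x powr \<delta> / (1 + e))) + b + d / 4" using elim(1) by simp
    also have "\<dots> < z"
    proof -
      have j': "exp (- (x powr \<delta> / (1 + e))) < exp (- (x powr \<delta>)) + d / 2" using j by (simp add: e_def)
      have N': "b < d / 4" using N by (simp add: b_def)
      have zd: "z = exp (- (x powr \<delta>)) + d" by (simp add: d_def)
      show ?thesis using j' N' zd by linarith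
    qed
    finally show ?case .
  qed
qed

end


context L begin

lemma cdf_eq: "cdf (distr M borel (\<lambda>w. (c / a * real n) powr (1 / \<delta>) * l n w)) x = 1 - Q n x"
proof -
  have "cdf (distr M borel (\<lambda>w. s n * l n w)) x = measure (distr M borel (\<lambda>w. s n * l n w)) {..x}"
    by (simp add: cdf_def)
  also have "\<dots> = prob ((\<lambda>w. s n * l n w) -` {..x} \<inter> space M)"
    by (rule measure_distr) auto
  also have "(\<lambda>w. s n * l n w) -` {..x} \<inter> space M = space M - {w\<in>space M. x < s n * l n w}"
    by auto
  also have "prob \<dots> = 1 - Q n x"
    unfolding Q_def by (subst finite_measure_Diff) (auto simp: prob_space)
  finally show ?thesis by (simp add: s_def)
qed

lemma Q_anti: "x \<le> z \<Longrightarrow> Q n z \<le> Q n x"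
  unfolding Q_def by (intro finite_measure_mono) auto

lemma weak_part: "weak_conv (\<lambda>n. cdf (distr M borel (\<lambda>x. (c / a * real n) powr (1 / \<delta>) * l n x))) (weibull_cdf \<delta>)"
  unfolding weak_conv_def cdf_eq
proof (intro allI impI)
  fix x :: real
  show "(\<lambda>n. 1 - Q n x) \<longlonglongrightarrow> weibull_cdf \<delta> x"
  proof (cases "0 < x")
    case True
    then show ?thesis using Q_lim[of x] by (auto simp: weibull_cdf_def intro!: tendsto_intros)
  next
    case False
    then have wx: "weibull_cdf \<delta> x = 0" by (simp add: weibull_cdf_def)
    show ?thesis unfolding wx
    proof (rule order_tendstoI)
      fix u :: real assume "u < 0"
      then show "eventually (\<lambda>n. u < 1 - Q n x) sequentially"
        by (intro always_eventually allI) (smt (verit) prob_le_1 Q_def)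
    next
      fix u :: real assume u: "0 < u"
      define z where "z = (u / 2) powr (1 / \<delta>)"
      have z0: "0 < z" using u by (simp add: z_def)
      have zd: "z powr \<delta> = u / 2" using u dpos by (simp add: z_def powr_powr)
      have "(\<lambda>n. 1 - Q n z) \<longlonglongrightarrow> 1 - exp (- (z powr \<delta>))"
        using Q_lim[of z] z0 by (auto intro!: tendsto_intros)
      moreover have "1 - exp (- (z powr \<delta>)) < u"
        using one_minus_le_exp[of "z powr \<delta>"] u unfolding zd by simp
      ultimately have "eventually (\<lambda>n. 1 - Q n z < u) sequentially"
        by (rule order_tendstoD(2))
      then show "eventually (\<lambda>n. 1 - Q n x < u) sequentially"
      proof eventually_elim
        case (elim n)
        have "Q n z \<le> Q n x" using False z0 by (intro Q_anti) auto
        then show ?case using elim by linarith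
      qed
    qed
  qed
qed

end


lemma pow_integral:
  fixes \<beta> y :: real assumes b: "0 < \<beta>" and y: "0 \<le> y"
  shows "(\<integral>\<^sup>+u. ennreal (indicator {0..} u * \<beta> * u powr (\<beta> - 1)) * indicator {..<y} u \<partial>lborel) = ennreal (y powr \<beta>)"
proof -
  have "((\<lambda>u. \<beta> * u powr (\<beta> - 1)) has_integral (y powr \<beta> - 0 powr \<beta>)) {0..y}"
  proof (rule fundamental_theorem_of_calculus_interior)
    show "continuous_on {0..y} (\<lambda>u. u powr \<beta>)"
      using b by (intro continuous_on_powr') (auto intro: continuous_intros)
    fix u assume "u \<in> {0<..<y}"
    then show "((\<lambda>u. u powr \<beta>) has_vector_derivative \<beta> * u powr (\<beta> - 1)) (at u)"
      using has_real_derivative_powr[of u \<beta>] by (simp add: has_real_derivative_iff_has_vector_derivative)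
  qed (use y in auto)
  then have "((\<lambda>u. \<beta> * u powr (\<beta> - 1)) has_integral (y powr \<beta>)) {0..y}" by simp
  then have "(\<integral>\<^sup>+u. ennreal (\<beta> * u powr (\<beta> - 1)) * indicator {0..y} u \<partial>lborel) = ennreal (y powr \<beta>)"
    using b by (intro nn_integral_has_integral_lebesgue') auto
  moreover have "(\<integral>\<^sup>+u. ennreal (indicator {0..} u * \<beta> * u powr (\<beta> - 1)) * indicator {..<y} u \<partial>lborel)
      = (\<integral>\<^sup>+u. ennreal (\<beta> * u powr (\<beta> - 1)) * indicator {0..y} u \<partial>lborel)"
    using AE_lborel_singleton[of y]
    by (intro nn_integral_cong_AE) (auto elim!: eventually_mono simp: indicator_def)
  ultimately show ?thesis by simp
qed

lemma layer_cake:
  fixes M :: "'a measure" and Y :: "'a \<Rightarrow> real" and \<beta> :: real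
  assumes sf: "sigma_finite_measure M" and Y[measurable]: "Y \<in> borel_measurable M"
    and Y0: "AE x in M. 0 \<le> Y x" and b: "0 < \<beta>"
  shows "(\<integral>\<^sup>+x. ennreal (Y x powr \<beta>) \<partial>M)
       = (\<integral>\<^sup>+u. ennreal (indicator {0..} u * \<beta> * u powr (\<beta> - 1)) * emeasure M {x\<in>space M. u < Y x} \<partial>lborel)"
proof -
  interpret sigma_finite_measure M by (rule sf)
  interpret P: pair_sigma_finite M lborel ..
  define g where "g u = ennreal (indicator {0..} u * \<beta> * u powr (\<beta> - 1))" for u :: real
  have gm[measurable]: "g \<in> borel_measurable borel" unfolding g_def by measurable
  have "(\<integral>\<^sup>+x. ennreal (Y x powr \<beta>) \<partial>M) = (\<integral>\<^sup>+x. (\<integral>\<^sup>+u. g u * indicator {..<Y x} u \<partial>lborel) \<partial>M)"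
    using Y0 by (intro nn_integral_cong_AE) (auto elim!: eventually_mono simp: pow_integral[OF b] g_def)
  also have "\<dots> = (\<integral>\<^sup>+u. (\<integral>\<^sup>+x. g u * indicator {..<Y x} u \<partial>M) \<partial>lborel)"
  proof (rule P.Fubini'[symmetric])
    have "(\<lambda>z. g (snd z) * indicator {..<Y (fst z)} (snd z)) = (\<lambda>z. g (snd z) * (if snd z < Y (fst z) then 1 else 0))"
      by (auto simp: indicator_def fun_eq_iff)
    moreover have "(\<lambda>z. g (snd z) * (if snd z < Y (fst z) then 1 else 0)) \<in> borel_measurable (M \<Otimes>\<^sub>M lborel)"
      by measurable
    ultimately show "(\<lambda>(x, u). g u * indicator {..<Y x} u) \<in> borel_measurable (M \<Otimes>\<^sub>M lborel)"
      by (simp add: case_prod_unfold)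
  qed
  also have "\<dots> = (\<integral>\<^sup>+u. g u * emeasure M {x\<in>space M. u < Y x} \<partial>lborel)"
  proof (intro nn_integral_cong)
    fix u :: real
    have "(\<integral>\<^sup>+x. g u * indicator {..<Y x} u \<partial>M) = (\<integral>\<^sup>+x. g u * indicator {x\<in>space M. u < Y x} x \<partial>M)"
      by (intro nn_integral_cong) (auto simp: indicator_def)
    also have "\<dots> = g u * emeasure M {x\<in>space M. u < Y x}"
      by (rule nn_integral_cmult_indicator) measurable
    finally show "(\<integral>\<^sup>+x. g u * indicator {..<Y x} u \<partial>M) = g u * emeasure M {x\<in>space M. u < Y x}" .
  qed
  finally show ?thesis by (simp add: g_def)
qed

lemma gamma_scaled:
  fixes k \<beta> :: real assumes k: "0 < k" and b: "0 < \<beta>"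
  shows "(\<integral>\<^sup>+u. ennreal (indicator {0..} u * u powr (\<beta> - 1) * exp (- (k * u))) \<partial>lborel)
       = ennreal (k powr (- \<beta>) * Gamma \<beta>)"
proof -
  define f where "f u = ennreal (indicator {0..} u * u powr (\<beta> - 1) * exp (- (k * u)))" for u :: real
  have fm[measurable]: "f \<in> borel_measurable borel" unfolding f_def by measurable
  have "(\<integral>\<^sup>+u. f u \<partial>lborel) = ennreal \<bar>1 / k\<bar> * (\<integral>\<^sup>+x. f (0 + (1 / k) * x) \<partial>lborel)"
    using k by (intro nn_integral_real_affine) auto
  also have "(\<integral>\<^sup>+x. f (0 + (1 / k) * x) \<partial>lborel)
      = (\<integral>\<^sup>+x. ennreal (k powr (1 - \<beta>)) * ennreal (indicator {0..} x * x powr (\<beta> - 1) / exp x) \<partial>lborel)"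
  proof (intro nn_integral_cong)
    fix x :: real
    show "f (0 + (1 / k) * x) = ennreal (k powr (1 - \<beta>)) * ennreal (indicator {0..} x * x powr (\<beta> - 1) / exp x)"
    proof (cases "0 \<le> x")
      case True
      have "(x / k) powr (\<beta> - 1) = x powr (\<beta> - 1) / k powr (\<beta> - 1)"
        using True k by (simp add: powr_divide)
      also have "\<dots> = k powr (1 - \<beta>) * x powr (\<beta> - 1)"
        using k by (simp add: powr_minus_divide[symmetric] divide_inverse powr_minus[symmetric] mult.commute)
      finally have "(x / k) powr (\<beta> - 1) = k powr (1 - \<beta>) * x powr (\<beta> - 1)" .
      then show ?thesis using True k
        by (simp add: f_def ennreal_mult[symmetric] exp_minus field_simps)
    next
      case False
      then have "x / k < 0" using k by (simp add: divide_neg_pos)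
      then show ?thesis using False by (simp add: f_def indicator_def)
    qed
  qed
  also have "\<dots> = ennreal (k powr (1 - \<beta>)) * (\<integral>\<^sup>+x. ennreal (indicator {0..} x * x powr (\<beta> - 1) / exp x) \<partial>lborel)"
    by (rule nn_integral_cmult) measurable
  also have "(\<integral>\<^sup>+x. ennreal (indicator {0..} x * x powr (\<beta> - 1) / exp x) \<partial>lborel) = ennreal (Gamma \<beta>)"
    using Gamma_conv_nn_integral_real[OF b] by simp
  also have "ennreal \<bar>1 / k\<bar> * (ennreal (k powr (1 - \<beta>)) * ennreal (Gamma \<beta>)) = ennreal (k powr (- \<beta>) * Gamma \<beta>)"
  proof -
    have "\<bar>1 / k\<bar> * (k powr (1 - \<beta>) * Gamma \<beta>) = k powr (- \<beta>) * Gamma \<beta>"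
      using k by (simp add: powr_diff powr_minus field_simps)
    then show ?thesis using k b by (simp add: ennreal_mult[symmetric])
  qed
  finally show ?thesis by (simp add: f_def)
qed

lemma gamma_scaled_int:
  fixes k \<beta> :: real assumes k: "0 < k" and b: "0 < \<beta>"
  shows "integrable lborel (\<lambda>u. indicator {0..} u * u powr (\<beta> - 1) * exp (- (k * u)))"
    and "(\<integral>u. indicator {0..} u * u powr (\<beta> - 1) * exp (- (k * u)) \<partial>lborel) = k powr (- \<beta>) * Gamma \<beta>"
proof -
  have nn: "AE u in lborel. 0 \<le> indicator {0..} u * u powr (\<beta> - 1) * exp (- (k * u))"
    by (intro AE_I2) (auto simp: indicator_def)
  show "integrable lborel (\<lambda>u. indicator {0..} u * u powr (\<beta> - 1) * exp (- (k * u)))"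
    by (rule integrableI_nn_integral_finite[OF _ nn gamma_scaled[OF k b]]) measurable
  show "(\<integral>u. indicator {0..} u * u powr (\<beta> - 1) * exp (- (k * u)) \<partial>lborel) = k powr (- \<beta>) * Gamma \<beta>"
    using gamma_scaled[OF k b] k b by (subst integral_eq_nn_integral[OF _ nn]) auto
qed



context L begin

definition qf where "qf n u = Q n ((max 0 u) powr (1 / \<delta>))"

lemma qf_meas[measurable]: "qf n \<in> borel_measurable borel"
proof -
  have "mono (\<lambda>u. - qf n u)"
  proof (rule monoI)
    fix u v :: real assume "u \<le> v"
    then have "(max 0 u) powr (1 / \<delta>) \<le> (max 0 v) powr (1 / \<delta>)"
      using dpos by (intro powr_mono2) auto
    then show "- qf n u \<le> - qf n v" unfolding qf_def using Q_anti by simp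
  qed
  then have "(\<lambda>u. - qf n u) \<in> borel_measurable borel" by (rule borel_measurable_mono)
  then have "(\<lambda>u. - (- qf n u)) \<in> borel_measurable borel" by measurable
  then show ?thesis by simp
qed

lemma Q0: "0 \<le> x \<Longrightarrow> Q 0 x = 0"
  unfolding Q_def s_def using dpos by simp

lemma qf_bound: "0 \<le> u \<Longrightarrow> qf n u \<le> exp (- (a / Bd * u))"
proof (cases "n = 0")
  case True
  assume u: "0 \<le> u"
  then show ?thesis using Q0[of "u powr (1/\<delta>)"] True by (simp add: qf_def)
next
  case False
  assume u: "0 \<le> u"
  have "(u powr (1 / \<delta>)) powr \<delta> = u" using u dpos by (simp add: powr_powr)
  then show ?thesis using Q_tail[of n "u powr (1/\<delta>)"] False u by (simp add: qf_def)
qed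

lemma qf_nonneg: "0 \<le> qf n u" by (simp add: qf_def Q_def)

lemma qf_lim: "0 \<le> u \<Longrightarrow> (\<lambda>n. qf n u) \<longlonglongrightarrow> exp (- u)"
proof -
  assume u: "0 \<le> u"
  have "(u powr (1 / \<delta>)) powr \<delta> = u" using u dpos by (simp add: powr_powr)
  then show ?thesis using Q_lim[of "u powr (1/\<delta>)"] u by (simp add: qf_def)
qed

definition Y where "Y n w = (s n * l n w) powr \<delta>"

lemma Y_meas[measurable]: "Y n \<in> borel_measurable M" unfolding Y_def by measurable

lemma emeasure_Y: assumes n: "n > 0" and u: "0 \<le> u"
  shows "emeasure M {w\<in>space M. u < Y n w} = ennreal (qf n u)"
proof -
  have "emeasure M {w\<in>space M. u < Y n w} = emeasure M {w\<in>space M. u powr (1 / \<delta>) < s n * l n w}"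
  proof (rule emeasure_eq_AE)
    show "AE x in M. (x \<in> {w\<in>space M. u < Y n w}) = (x \<in> {w\<in>space M. u powr (1 / \<delta>) < s n * l n w})"
      using l_nonneg
    proof eventually_elim
      case (elim x)
      then have "0 \<le> s n * l n x" using s_pos[OF n] by auto
      then have "u < (s n * l n x) powr \<delta> \<longleftrightarrow> u powr (1 / \<delta>) < s n * l n x"
        using powr_inv_less[of "u powr (1/\<delta>)" "(s n * l n x) powr \<delta>" \<delta>] u dpos
        by (simp add: powr_powr)
      then show ?case by (simp add: Y_def)
    qed
  qed auto
  also have "\<dots> = ennreal (qf n u)"
    using u by (simp add: qf_def Q_def emeasure_eq_measure)
  finally show ?thesis .
qed

definition fn where "fn \<beta> n u = indicator {0..} u * \<beta> * u powr (\<beta> - 1) * qf n u"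
definition finf where "finf \<beta> u = indicator {0..} u * \<beta> * u powr (\<beta> - 1) * exp (- u)"
definition wb where "wb \<beta> u = \<beta> * (indicator {0..} u * u powr (\<beta> - 1) * exp (- (a / Bd * u)))"

lemma fn_meas[measurable]: "fn \<beta> n \<in> borel_measurable borel"
  unfolding fn_def[abs_def] by measurable

lemma fn_props: assumes b: "0 < \<beta>"
  shows "integrable lborel (fn \<beta> n)"
    and "(\<lambda>n. integral\<^sup>L lborel (fn \<beta> n)) \<longlonglongrightarrow> \<beta> * Gamma \<beta>"
proof -
  have kp: "0 < a / Bd" using apos Bd_pos by simp
  have wint: "integrable lborel (wb \<beta>)"
    unfolding wb_def[abs_def] using gamma_scaled_int(1)[OF kp b] by (rule integrable_mult_right)
  have lim: "AE u in lborel. (\<lambda>n. fn \<beta> n u) \<longlonglongrightarrow> finf \<beta> u"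
  proof (intro AE_I2)
    fix u :: real
    show "(\<lambda>n. fn \<beta> n u) \<longlonglongrightarrow> finf \<beta> u"
    proof (cases "0 \<le> u")
      case True
      then show ?thesis unfolding fn_def finf_def by (intro tendsto_intros qf_lim)
    qed (simp add: fn_def finf_def)
  qed
  have bound: "AE u in lborel. norm (fn \<beta> n u) \<le> wb \<beta> u" for n
  proof (intro AE_I2)
    fix u :: real
    show "norm (fn \<beta> n u) \<le> wb \<beta> u"
    proof (cases "0 \<le> u")
      case True
      have "0 \<le> \<beta> * u powr (\<beta> - 1)" using b by simp
      then have "\<beta> * u powr (\<beta> - 1) * qf n u \<le> \<beta> * u powr (\<beta> - 1) * exp (- (a / Bd * u))"
        using qf_bound[OF True, of n] by (intro mult_left_mono) auto
      then show ?thesis using True b qf_nonneg[of n u] by (simp add: fn_def wb_def abs_mult mult.assoc)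
    qed (simp add: fn_def wb_def)
  qed
  have fm: "finf \<beta> \<in> borel_measurable lborel" unfolding finf_def[abs_def] by simp
  have fnm: "\<And>i. fn \<beta> i \<in> borel_measurable lborel" by simp
  show "integrable lborel (fn \<beta> n)"
    using integrable_dominated_convergence2[OF fm fnm wint lim bound] by simp
  have "(\<lambda>n. integral\<^sup>L lborel (fn \<beta> n)) \<longlonglongrightarrow> integral\<^sup>L lborel (finf \<beta>)"
    by (rule integral_dominated_convergence[OF fm fnm wint lim bound])
  moreover have "integral\<^sup>L lborel (finf \<beta>) = \<beta> * Gamma \<beta>"
  proof -
    have "integral\<^sup>L lborel (finf \<beta>) = (\<integral>u. \<beta> * (indicator {0..} u * u powr (\<beta> - 1) * exp (- (1 * u))) \<partial>lborel)"
      by (intro Bochner_Integration.integral_cong) (auto simp: finf_def)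
    also have "\<dots> = \<beta> * (1 powr (- \<beta>) * Gamma \<beta>)"
      using gamma_scaled_int(2)[of 1 \<beta>] b by simp
    finally show ?thesis by simp
  qed
  ultimately show "(\<lambda>n. integral\<^sup>L lborel (fn \<beta> n)) \<longlonglongrightarrow> \<beta> * Gamma \<beta>" by simp
qed

lemma fn_nonneg: "0 \<le> \<beta> \<Longrightarrow> 0 \<le> fn \<beta> n u"
  using qf_nonneg[of n u] by (simp add: fn_def indicator_def)

lemma moment_eq: assumes n: "n > 0" and al: "0 < \<alpha>"
  shows "expectation (\<lambda>x. (c / a * real n) powr (\<alpha> / \<delta>) * l n x powr \<alpha>) = integral\<^sup>L lborel (fn (\<alpha> / \<delta>) n)"
proof -
  define \<beta> where "\<beta> = \<alpha> / \<delta>"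
  have b: "0 < \<beta>" using al dpos by (simp add: \<beta>_def)
  have "(\<integral>\<^sup>+w. ennreal (Y n w powr \<beta>) \<partial>M)
      = (\<integral>\<^sup>+u. ennreal (indicator {0..} u * \<beta> * u powr (\<beta> - 1)) * emeasure M {w\<in>space M. u < Y n w} \<partial>lborel)"
    by (rule layer_cake) (auto simp: b Y_def intro: prob_space_imp_sigma_finite[OF PS])
  also have "\<dots> = (\<integral>\<^sup>+u. ennreal (fn \<beta> n u) \<partial>lborel)"
  proof (intro nn_integral_cong)
    fix u :: real
    show "ennreal (indicator {0..} u * \<beta> * u powr (\<beta> - 1)) * emeasure M {w\<in>space M. u < Y n w} = ennreal (fn \<beta> n u)"
    proof (cases "0 \<le> u")
      case True
      then show ?thesis using emeasure_Y[OF n True] b qf_nonneg[of n u]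
        by (simp add: fn_def ennreal_mult[symmetric])
    qed (simp add: fn_def)
  qed
  also have "\<dots> = ennreal (integral\<^sup>L lborel (fn \<beta> n))"
    using fn_props(1)[OF b] fn_nonneg b by (intro nn_integral_eq_integral) auto
  finally have nn: "(\<integral>\<^sup>+w. ennreal (Y n w powr \<beta>) \<partial>M) = ennreal (integral\<^sup>L lborel (fn \<beta> n))" .
  have "expectation (\<lambda>w. Y n w powr \<beta>) = enn2real (\<integral>\<^sup>+w. ennreal (Y n w powr \<beta>) \<partial>M)"
    by (rule integral_eq_nn_integral) auto
  also have "\<dots> = integral\<^sup>L lborel (fn \<beta> n)"
    using nn fn_nonneg b by (simp add: integral_nonneg_AE)
  finally have e1: "expectation (\<lambda>w. Y n w powr \<beta>) = integral\<^sup>L lborel (fn \<beta> n)" .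
  have "expectation (\<lambda>x. (c / a * real n) powr (\<alpha> / \<delta>) * l n x powr \<alpha>) = expectation (\<lambda>w. Y n w powr \<beta>)"
  proof (rule integral_cong_AE)
    show "AE x in M. (c / a * real n) powr (\<alpha> / \<delta>) * l n x powr \<alpha> = Y n x powr \<beta>"
      using l_nonneg
    proof eventually_elim
      case (elim x)
      have l0: "0 \<le> l n x" using elim by auto
      have s0: "0 \<le> s n" using s_pos[OF n] by simp
      have "Y n x powr \<beta> = (s n * l n x) powr \<alpha>"
        using dpos by (simp add: Y_def powr_powr \<beta>_def)
      also have "\<dots> = s n powr \<alpha> * l n x powr \<alpha>" using l0 s0 by (simp add: powr_mult)
      also have "s n powr \<alpha> = (c / a * real n) powr (\<alpha> / \<delta>)"
        by (simp add: s_def powr_powr)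
      finally show ?case by simp
    qed
  qed auto
  then show ?thesis using e1 by (simp add: \<beta>_def)
qed

lemma moment_part: "\<forall>\<alpha>>0. (\<lambda>n. expectation (\<lambda>x. (c / a * real n) powr (\<alpha> / \<delta>) * l n x powr \<alpha>))
                \<longlonglongrightarrow> \<alpha> / \<delta> * Gamma (\<alpha> / \<delta>)"
proof (intro allI impI)
  fix \<alpha> :: real assume al: "0 < \<alpha>"
  have b: "0 < \<alpha> / \<delta>" using al dpos by simp
  have "eventually (\<lambda>n. integral\<^sup>L lborel (fn (\<alpha> / \<delta>) n) = expectation (\<lambda>x. (c / a * real n) powr (\<alpha> / \<delta>) * l n x powr \<alpha>)) sequentially"
    using eventually_gt_at_top[of "0::nat"]
  proof eventually_elim
    case (elim n)
    show ?case using moment_eq[OF elim al] by (rule sym)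
  qed
  then show "(\<lambda>n. expectation (\<lambda>x. (c / a * real n) powr (\<alpha> / \<delta>) * l n x powr \<alpha>))
                \<longlonglongrightarrow> \<alpha> / \<delta> * Gamma (\<alpha> / \<delta>)"
    using fn_props(2)[OF b] by (rule Lim_transform_eventually[rotated])
qed

end


theorem lemma3:
  fixes M :: "'w measure" and F :: "nat \<Rightarrow> 'w measure"
    and as l \<omega> V :: "nat \<Rightarrow> 'w \<Rightarrow> real"
    and \<delta> c a :: real
  assumes "prob_space M"
    and "\<delta> > 0" and "c > 0" and "a > 0"
    and subalg: "\<And>n. subalgebra M (F n)"
    and filt: "filtration (space M) F"
    and meas_as: "\<And>n. as n \<in> borel_measurable (F n)"
    and meas_l: "\<And>n. l n \<in> borel_measurable (F n)"
    and meas_\<omega>: "\<And>n. \<omega> (Suc n) \<in> borel_measurable (F (Suc n))"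
    and meas_V: "\<And>n. V (Suc n) \<in> borel_measurable (F (Suc n))"
    and as_nonneg: "\<And>n x. x \<in> space M \<Longrightarrow> as n x \<ge> 0"
    and as_bdd: "\<exists>B. \<forall>n. \<forall>x\<in>space M. as n x \<le> B"
    and as_lim: "AE x in M. decseq (\<lambda>n. as n x) \<and> (\<lambda>n. as n x) \<longlonglongrightarrow> a"
    and l0: "\<And>x. x \<in> space M \<Longrightarrow> l 0 x = 1"
    and p_range: "\<And>n x. x \<in> space M \<Longrightarrow>
                    c * l n x powr \<delta> / as n x \<in> {0..1}"
    and cond1: "\<And>n A y. A \<in> sets (F n) \<Longrightarrow> y \<in> {0..1} \<Longrightarrow>
        measure M (A \<inter> {x \<in> space M. \<omega> (Suc n) x = 1 \<and> V (Suc n) x \<le> y})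
          = (\<integral>x. indicator A x * (c * l n x powr \<delta> / as n x) \<partial>M) * y powr \<delta>"
    and cond0: "\<And>n A y. A \<in> sets (F n) \<Longrightarrow> y \<in> {0..1} \<Longrightarrow>
        measure M (A \<inter> {x \<in> space M. \<omega> (Suc n) x = 0 \<and> V (Suc n) x \<le> y})
          = (\<integral>x. indicator A x * (1 - c * l n x powr \<delta> / as n x) \<partial>M) * y powr \<delta>"
    and rec1: "\<And>n x. x \<in> space M \<Longrightarrow> \<omega> (Suc n) x = 1 \<Longrightarrow>
                 l (Suc n) x = l n x * V (Suc n) x"
    and rec0: "\<And>n x. x \<in> space M \<Longrightarrow> \<omega> (Suc n) x = 0 \<Longrightarrow>
                 l (Suc n) x = l n x"
  shows "weak_conv
           (\<lambda>n. cdf (distr M borel (\<lambda>x. (c / a * real n) powr (1 / \<delta>) * l n x)))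
           (weibull_cdf \<delta>)
       \<and> (\<forall>\<alpha>>0. (\<lambda>n. prob_space.expectation M
                     (\<lambda>x. (c / a * real n) powr (\<alpha> / \<delta>) * l n x powr \<alpha>))
                \<longlonglongrightarrow> \<alpha> / \<delta> * Gamma (\<alpha> / \<delta>))"
proof -
  interpret L M F as l \<omega> V \<delta> c a
    by (rule L.intro) (fact assms)+
  show ?thesis by (rule conjI[OF weak_part moment_part])
qed

end
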